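(* Let $P=\{x\in\mathbb R^n : Ax=b,\ Bx\le d\}$ with $A\in\mathbb R^{m_A\times n}$, $B\in\mathbb R^{m_B\times n}$ be a pointed polyhedron. Then the cone $$C_{A,B}=\{(x,y^+,y^-)\in\mathbb R^{n+2m_B} : Ax=0,\ Bx=y^+-y^-,\ y^+,y^-\ge 0\}$$ is pointed and is generated by a set of extreme rays $S\cup T'$, where: (1) $S:=\{(g,y^+,y^-) : g\in\mathcal C(A,B),\ y^+_i=\max\{(Bg)_i,0\},\ y^-_i=\max\{-(Bg)_i,0\}\ \text{for } i\le m_B\}$ (these give the circuits of $P$); (2) $T'$ is a subset of $T:=\{(0,y^+,y^-) : \text{for some } i\le m_B,\ y^+_i=y^-_i=1 \text{ and } y^+_j=y^-_j=0 \text{ for } j\ne i\}$ with $|T'|\le m_B$. That is, the extreme rays of $C_{A,B}$ are exactly the rays spanned by the elements of $S\cup T'$.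
   Context: $P$ is pointed means $\operatorname{rank}\binom{A}{B}=n$. The set of circuits $\mathcal C(A,B)$ of $P$ consists of all $g\in\ker(A)\setminus\{0\}$ normalized to coprime integer components for which $Bg$ is support-minimal over $\{Bx : x\in\ker(A)\setminus\{0\}\}$, i.e. no $x\in\ker(A)\setminus\{0\}$ satisfies $\operatorname{supp}(Bx)\subsetneq\operatorname{supp}(Bg)$. *)

theory Defs
  imports "HOL-Analysis.Analysis"
begin

definition stack_mat :: "real^'n^'ma \<Rightarrow> real^'n^'mb \<Rightarrow> real^'n^('ma + 'mb)" where
  "stack_mat A B = (\<chi> k. case k of Inl i \<Rightarrow> A $ i | Inr j \<Rightarrow> B $ j)"

text \<open>The polyhedron {x. Ax = b, Bx <= d} is pointed: rank of (A;B) equals n.\<close>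
definition pointed_poly :: "real^'n^'ma \<Rightarrow> real^'n^'mb \<Rightarrow> bool" where
  "pointed_poly A B \<longleftrightarrow> rank (stack_mat A B) = CARD('n)"

definition vsupp :: "real^'m \<Rightarrow> 'm set" where
  "vsupp v = {i. v $ i \<noteq> 0}"

definition circuits :: "real^'n^'ma \<Rightarrow> real^'n^'mb \<Rightarrow> (real^'n) set" where
  "circuits A B = {g. A *v g = 0 \<and> g \<noteq> 0
      \<and> (\<forall>i. g $ i \<in> \<int>)
      \<and> Gcd ((\<lambda>i. \<lfloor>g $ i\<rfloor>) ` UNIV) = (1::int)
      \<and> \<not> (\<exists>x. A *v x = 0 \<and> x \<noteq> 0 \<and> vsupp (B *v x) \<subset> vsupp (B *v g))}"

text \<open>The cone C_{A,B} in R^{n + 2 m_B}, points written as triples (x, y+, y-).\<close>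
definition cone_AB :: "real^'n^'ma \<Rightarrow> real^'n^'mb \<Rightarrow> ((real^'n) \<times> (real^'mb) \<times> (real^'mb)) set" where
  "cone_AB A B = {(x, yp, ym). A *v x = 0 \<and> B *v x = yp - ym
      \<and> (\<forall>i. 0 \<le> yp $ i) \<and> (\<forall>i. 0 \<le> ym $ i)}"

definition pointed_cone :: "'a::real_vector set \<Rightarrow> bool" where
  "pointed_cone C \<longleftrightarrow> (\<forall>z. z \<in> C \<and> - z \<in> C \<longrightarrow> z = 0)"

definition ray :: "'a::real_vector \<Rightarrow> 'a set" where
  "ray r = {t *\<^sub>R r | t. 0 \<le> t}"

definition extreme_ray_of :: "'a::real_vector set \<Rightarrow> 'a set \<Rightarrow> bool" where
  "extreme_ray_of R C \<longleftrightarrow> (\<exists>r. r \<noteq> 0 \<and> R = ray r \<and> R face_of C)"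

definition S_set :: "real^'n^'ma \<Rightarrow> real^'n^'mb \<Rightarrow> ((real^'n) \<times> (real^'mb) \<times> (real^'mb)) set" where
  "S_set A B = {(g, \<chi> i. max ((B *v g) $ i) 0, \<chi> i. max (- (B *v g) $ i) 0) | g. g \<in> circuits A B}"

definition T_set :: "((real^'n) \<times> (real^'mb) \<times> (real^'mb)) set" where
  "T_set = {(0, axis i 1, axis i 1) | i. True}"

end

theory Submission
  imports Defs
begin

lemma all_sum_split: "(\<forall>k. P k) \<longleftrightarrow> (\<forall>i. P (Inl i)) \<and> (\<forall>j. P (Inr j))"
  by (metis obj_sumE)

lemma stack_mv: "(stack_mat A' B' *v v) $ Inl i = (A' *v v) $ i" "(stack_mat A' B' *v v) $ Inr j = (B' *v v) $ j"
  by (simp_all add: stack_mat_def matrix_vector_mult_def)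

lemma rat_kernel:
  fixes M :: "real^'n^'k"
  assumes rat: "\<forall>i j. M $ i $ j \<in> \<rat>" and x: "x \<noteq> 0" "M *v x = 0"
  shows "\<exists>r. r \<noteq> 0 \<and> (\<forall>j. r $ j \<in> \<rat>) \<and> M *v r = 0"
proof (rule ccontr)
  assume nex0: "\<not> ?thesis"
  have nex: "False" if "r \<noteq> 0" "\<forall>j. r $ j \<in> \<rat>" "M *v r = 0" for r
    by (rule notE[OF nex0], rule exI[of _ r], simp add: that)
  define Mr :: "rat^'n^'k" where "Mr = (\<chi> i j. SOME q. M $ i $ j = of_rat q)"
  have Mr: "of_rat (Mr $ i $ j) = M $ i $ j" for i j
  proof -
    have "\<exists>q. M $ i $ j = of_rat q" using rat by (metis Rats_cases)
    then show ?thesis unfolding Mr_def by (metis (mono_tags, lifting) someI_ex vec_lambda_beta)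
  qed
  have "\<forall>v. Mr *v v = 0 \<longrightarrow> v = 0"
  proof (intro allI impI)
    fix v assume v: "Mr *v v = 0"
    define r :: "real^'n" where "r = (\<chi> j. of_rat (v $ j))"
    have "M *v r = 0"
    proof -
      have "(M *v r) $ i = of_rat ((Mr *v v) $ i)" for i
        by (simp add: matrix_vector_mult_def r_def Mr of_rat_sum of_rat_mult)
      then show ?thesis using v by (simp add: vec_eq_iff)
    qed
    moreover have "\<forall>j. r $ j \<in> \<rat>" by (simp add: r_def)
    ultimately have "r = 0" using nex[of r] by auto
    then show "v = 0" by (simp add: r_def vec_eq_iff)
  qed
  then have "\<exists>Br :: rat^'k^'n. Br ** Mr = mat 1" by (simp only: matrix_left_invertible_ker)
  then obtain Br :: "rat^'k^'n" where Br: "Br ** Mr = mat 1" by blast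
  define Bm :: "real^'k^'n" where "Bm = (\<chi> i j. of_rat (Br $ i $ j))"
  have "Bm ** M = mat 1"
  proof -
    have "(Bm ** M) $ i $ j = of_rat ((Br ** Mr) $ i $ j)" for i j
      by (simp add: matrix_matrix_mult_def Bm_def Mr[symmetric] of_rat_sum of_rat_mult)
    then show ?thesis using Br by (simp add: vec_eq_iff mat_def)
  qed
  then have "\<exists>B' :: real^'k^'n. B' ** M = mat 1" by blast
  then have "\<forall>x. M *v x = 0 \<longrightarrow> x = 0" by (simp only: matrix_left_invertible_ker)
  then have "x = 0" using x by blast
  then show False using x by simp
qed

definition pp :: "real^'m \<Rightarrow> real^'m" where "pp v = (\<chi> i. max (v $ i) 0)"
definition nn :: "real^'m \<Rightarrow> real^'m" where "nn v = (\<chi> i. max (- v $ i) 0)"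
definition conf :: "real^'m \<Rightarrow> real^'m \<Rightarrow> bool" where "conf u v \<longleftrightarrow> (\<forall>i. 0 \<le> u $ i * v $ i)"

lemma pp_nth[simp]: "pp v $ i = max (v $ i) 0" by (simp add: pp_def)
lemma nn_nth[simp]: "nn v $ i = max (- v $ i) 0" by (simp add: nn_def)

lemma pp_minus_nn: "pp v - nn v = v" by (auto simp: vec_eq_iff max_def)

lemma max_add_conf: "0 \<le> (a::real) * b \<Longrightarrow> max (a + b) 0 = max a 0 + max b 0"
  by (auto simp: max_def zero_le_mult_iff)
lemma max_add_conf2: "0 \<le> (a::real) * b \<Longrightarrow> max (- a - b) 0 = max (- a) 0 + max (- b) 0"
  by (auto simp: max_def zero_le_mult_iff)

lemma conf_add: assumes "conf u v" shows "pp (u + v) = pp u + pp v" "nn (u + v) = nn u + nn v"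
  using assms by (auto simp: vec_eq_iff conf_def max_add_conf max_add_conf2)

lemma max_scale: "0 \<le> (c::real) \<Longrightarrow> max (c * a) 0 = c * max a 0"
  using mult_nonneg_nonneg[of c a] mult_nonneg_nonpos[of c a] by (cases "0 \<le> a") (simp_all add: max_absorb1 max_absorb2)
lemma pp_scale: "0 \<le> c \<Longrightarrow> pp (c *\<^sub>R v) = c *\<^sub>R pp v"
  by (simp add: vec_eq_iff max_scale)
lemma nn_scale: "0 \<le> c \<Longrightarrow> nn (c *\<^sub>R v) = c *\<^sub>R nn v"
  using max_scale[of c "- _"] by (simp add: vec_eq_iff)
lemma pp_uminus: "pp (- v) = nn v" by (simp add: vec_eq_iff)
lemma nn_uminus: "nn (- v) = pp v" by (simp add: vec_eq_iff)

lemma vsupp_iff: "i \<in> vsupp v \<longleftrightarrow> v $ i \<noteq> 0" by (simp add: vsupp_def)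

lemma vsupp_zero: "vsupp v = {} \<longleftrightarrow> v = 0" by (auto simp: vsupp_def vec_eq_iff)

lemma ray_scale: assumes "0 < c" shows "ray (c *\<^sub>R r) = ray r"
proof -
  have "{t *\<^sub>R (c *\<^sub>R r) |t. 0 \<le> t} = {t *\<^sub>R r |t. 0 \<le> t}"
  proof (intro set_eqI iffI)
    fix z assume "z \<in> {t *\<^sub>R (c *\<^sub>R r) |t. 0 \<le> t}"
    then obtain t where "0 \<le> t" "z = (t * c) *\<^sub>R r" by auto
    then show "z \<in> {t *\<^sub>R r |t. 0 \<le> t}" using assms by (intro CollectI exI[of _ "t*c"]) auto
  next
    fix z assume "z \<in> {t *\<^sub>R r |t. 0 \<le> t}"
    then obtain t where "0 \<le> t" "z = t *\<^sub>R r" by auto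
    then have "z = (t / c) *\<^sub>R (c *\<^sub>R r)" using assms by simp
    then show "z \<in> {t *\<^sub>R (c *\<^sub>R r) |t. 0 \<le> t}" using assms \<open>0 \<le> t\<close> by fastforce
  qed
  then show ?thesis by (simp add: ray_def)
qed

lemma convex_ray: "convex (ray r)"
  unfolding ray_def convex_def
proof (clarify)
  fix u v :: real and s t :: real
  assume "0 \<le> u" "0 \<le> v" "u + v = 1" "0 \<le> s" "0 \<le> t"
  then have "u *\<^sub>R s *\<^sub>R r + v *\<^sub>R t *\<^sub>R r = (u * s + v * t) *\<^sub>R r" "0 \<le> u * s + v * t"
    by (auto simp: algebra_simps)
  then show "\<exists>ta. u *\<^sub>R s *\<^sub>R r + v *\<^sub>R t *\<^sub>R r = ta *\<^sub>R r \<and> 0 \<le> ta" by blast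
qed

lemma face_ray:
  fixes C :: "'a::real_vector set"
  assumes cc: "convex_cone C" and pc: "pointed_cone C" and rC: "r \<in> C"
    and ind: "\<And>a b. a \<in> C \<Longrightarrow> b \<in> C \<Longrightarrow> a + b = r \<Longrightarrow> a \<in> ray r"
  shows "ray r face_of C"
  unfolding face_of_def
proof (intro conjI ballI impI)
  show "ray r \<subseteq> C" using cc rC by (auto simp: ray_def convex_cone_iff)
  show "convex (ray r)" by (rule convex_ray)
next
  have ind2: "a \<in> ray r" if prem: "a \<in> C" "b \<in> C" "x \<in> ray r" "x \<in> open_segment a b" for a b x
  proof -
    obtain u where u: "0 < u" "u < 1" "x = (1 - u) *\<^sub>R a + u *\<^sub>R b" using prem(4) by (auto simp: in_segment)
    obtain t where t: "0 \<le> t" "x = t *\<^sub>R r" using prem(3) by (auto simp: ray_def)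
    have a1: "(1 - u) *\<^sub>R a \<in> C" "u *\<^sub>R b \<in> C" using cc prem u by (auto simp: convex_cone_iff)
    show ?thesis
    proof (cases "t = 0")
      case True
      then have "(1 - u) *\<^sub>R a = - (u *\<^sub>R b)" using u t by (simp add: eq_neg_iff_add_eq_0)
      then have "(1 - u) *\<^sub>R a = 0" using pc a1 unfolding pointed_cone_def by (metis minus_minus)
      then have "a = 0" using u by simp
      then show ?thesis unfolding ray_def by (auto intro: exI[of _ 0])
    next
      case False
      then have tp: "0 < t" using t by simp
      have "r = (1 / t) *\<^sub>R ((1 - u) *\<^sub>R a + u *\<^sub>R b)" using t u tp by simp
      then have "((1 - u) / t) *\<^sub>R a + (u / t) *\<^sub>R b = r"
        by (simp add: scaleR_add_right scaleR_scaleR)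
      moreover have "((1 - u) / t) *\<^sub>R a \<in> C" "(u / t) *\<^sub>R b \<in> C"
        using cc prem u tp by (auto simp: convex_cone_iff)
      ultimately have "((1 - u) / t) *\<^sub>R a \<in> ray r" using ind by blast
      then obtain s where s: "0 \<le> s" "((1 - u) / t) *\<^sub>R a = s *\<^sub>R r" by (auto simp: ray_def)
      have "a = (t / (1 - u)) *\<^sub>R (((1 - u) / t) *\<^sub>R a)" using u tp by simp
      also have "\<dots> = (s * t / (1 - u)) *\<^sub>R r" using s(2) by simp
      finally have "a = (s * t / (1 - u)) *\<^sub>R r" .
      then show ?thesis using s u tp unfolding ray_def by force
    qed
  qed
  fix a b x assume "a \<in> C" "b \<in> C" "x \<in> ray r" "x \<in> open_segment a b"
  then show "a \<in> ray r" "b \<in> ray r" using ind2[of a b x] ind2[of b a x] by (auto simp: open_segment_commute)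
qed

lemma reduce:
  fixes u v :: "real^'m"
  assumes sub: "vsupp v \<subseteq> vsupp u" and ex: "\<exists>i. 0 < u $ i * v $ i"
  shows "\<exists>t>0. (\<forall>i. 0 \<le> (u - t *\<^sub>R v) $ i * u $ i) \<and> vsupp (u - t *\<^sub>R v) \<subset> vsupp u"
proof -
  define I where "I = {i. 0 < u $ i * v $ i}"
  have fI: "finite I" "I \<noteq> {}" using ex by (auto simp: I_def)
  define t where "t = Min ((\<lambda>i. u $ i / v $ i) ` I)"
  have "t \<in> (\<lambda>i. u $ i / v $ i) ` I" unfolding t_def using fI by (intro Min_in) auto
  then obtain j where j: "j \<in> I" "t = u $ j / v $ j" by auto
  have tle: "t \<le> u $ i / v $ i" if "i \<in> I" for i
    unfolding t_def using fI that by (intro Min_le) auto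
  have pos: "0 < u $ i / v $ i" if "i \<in> I" for i
    using that by (auto simp: I_def zero_less_mult_iff zero_less_divide_iff)
  have tpos: "0 < t" using pos[OF j(1)] j(2) by simp
  have main: "0 \<le> (u - t *\<^sub>R v) $ i * u $ i" for i
  proof (cases "i \<in> I")
    case True
    then have vi: "v $ i \<noteq> 0" by (auto simp: I_def)
    have h: "u $ i * v $ i * (u $ i / v $ i) = u $ i * u $ i" using vi by (simp add: field_simps)
    have "(u - t *\<^sub>R v) $ i * u $ i = u $ i * u $ i - t * (u $ i * v $ i)" by (simp add: algebra_simps)
    also have "\<dots> = (u $ i * v $ i) * (u $ i / v $ i - t)" using h by (simp add: algebra_simps)
    finally have eq: "(u - t *\<^sub>R v) $ i * u $ i = (u $ i * v $ i) * (u $ i / v $ i - t)" .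
    have "0 \<le> u $ i * v $ i" using True by (simp add: I_def)
    moreover have "0 \<le> u $ i / v $ i - t" using tle[OF True] by simp
    ultimately show ?thesis unfolding eq by (rule mult_nonneg_nonneg)
  next
    case False
    then have "u $ i * v $ i \<le> 0" by (simp add: I_def)
    then have "t * (u $ i * v $ i) \<le> 0" using tpos by (simp add: mult_nonneg_nonpos)
    moreover have "0 \<le> u $ i * u $ i" by simp
    ultimately have "0 \<le> u $ i * u $ i - t * (u $ i * v $ i)" by linarith
    then show ?thesis by (simp add: algebra_simps)
  qed
  have vj: "v $ j \<noteq> 0" "u $ j \<noteq> 0" using j(1) by (auto simp: I_def)
  have zj: "(u - t *\<^sub>R v) $ j = 0" using vj j(2) by simp
  have "vsupp (u - t *\<^sub>R v) \<subseteq> vsupp u" using sub by (auto simp: vsupp_def)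
  moreover have "j \<in> vsupp u" "j \<notin> vsupp (u - t *\<^sub>R v)" using vj zj by (auto simp: vsupp_def)
  ultimately show ?thesis using main tpos by blast
qed

lemma sign_trans: "0 < (a::real) * b \<Longrightarrow> 0 < b * c \<Longrightarrow> 0 < a * c"
  by (auto simp: zero_less_mult_iff)
lemma sign_trans2: "0 \<le> (a::real) * b \<Longrightarrow> 0 < c * b \<Longrightarrow> 0 \<le> a * c"
  by (auto simp: zero_less_mult_iff zero_le_mult_iff)

lemma mv_neg: fixes M :: "real^'n^'m" shows "M *v (- x) = - (M *v x)"
  using matrix_vector_mult_scaleR[of M "-1" x] by simp

locale cctx =
  fixes A :: "real^'n^'ma" and B :: "real^'n^'mb"
  assumes P0: "\<And>x. A *v x = 0 \<Longrightarrow> B *v x = 0 \<Longrightarrow> x = 0"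
    and ratA: "\<forall>i j. A $ i $ j \<in> \<rat>" and ratB: "\<forall>i j. B $ i $ j \<in> \<rat>"
begin

definition E :: "real^'n \<Rightarrow> (real^'n) \<times> (real^'mb) \<times> (real^'mb)" where
  "E x = (x, pp (B *v x), nn (B *v x))"

definition minimal :: "real^'n \<Rightarrow> bool" where
  "minimal x \<longleftrightarrow> A *v x = 0 \<and> x \<noteq> 0 \<and>
     \<not> (\<exists>x'. A *v x' = 0 \<and> x' \<noteq> 0 \<and> vsupp (B *v x') \<subset> vsupp (B *v x))"

lemma Bnz: "A *v x = 0 \<Longrightarrow> x \<noteq> 0 \<Longrightarrow> B *v x \<noteq> 0" using P0 by blast

lemma Bvec_lin: "B *v (x - l *\<^sub>R y) = B *v x - l *\<^sub>R (B *v y)" "A *v (x - l *\<^sub>R y) = A *v x - l *\<^sub>R (A *v y)"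
  by (simp_all add: matrix_vector_mult_diff_distrib matrix_vector_mult_scaleR)

lemma mult_of_min:
  assumes g: "minimal g" and y: "A *v y = 0" and sub: "vsupp (B *v y) \<subseteq> vsupp (B *v g)"
  shows "\<exists>l. y = l *\<^sub>R g"
proof (cases "y = 0")
  case True then show ?thesis by (intro exI[of _ 0]) simp
next
  case False
  have gk: "A *v g = 0" "g \<noteq> 0"
    and gm: "\<And>x'. A *v x' = 0 \<Longrightarrow> x' \<noteq> 0 \<Longrightarrow> \<not> vsupp (B *v x') \<subset> vsupp (B *v g)"
    using g by (auto simp: minimal_def)
  have eq: "vsupp (B *v y) = vsupp (B *v g)" using gm[OF y False] sub by blast
  have eqi: "(B *v y) $ i \<noteq> 0 \<longleftrightarrow> (B *v g) $ i \<noteq> 0" for i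
    using eq by (auto simp: vsupp_def set_eq_iff)
  have "B *v y \<noteq> 0" using Bnz y False by blast
  then obtain i0 where i0: "i0 \<in> vsupp (B *v y)" using vsupp_zero by blast
  then have gi0: "(B *v g) $ i0 \<noteq> 0" using eq by (simp add: vsupp_iff)
  define l where "l = (B *v y) $ i0 / (B *v g) $ i0"
  define z where "z = y - l *\<^sub>R g"
  have Az: "A *v z = 0" using gk y by (simp add: z_def Bvec_lin)
  have Bz: "B *v z = B *v y - l *\<^sub>R (B *v g)" by (simp add: z_def Bvec_lin)
  have "vsupp (B *v z) \<subset> vsupp (B *v g)"
  proof
    show "vsupp (B *v z) \<subseteq> vsupp (B *v g)" using eqi by (auto simp: Bz vsupp_iff)
    have "(B *v z) $ i0 = 0" using gi0 by (simp add: Bz l_def)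
    then show "vsupp (B *v z) \<noteq> vsupp (B *v g)" using gi0 by (auto simp: vsupp_iff set_eq_iff)
  qed
  then have "z = 0" using gm[OF Az] by blast
  then show ?thesis by (auto simp: z_def)
qed

lemma minimal_scale: "minimal x \<Longrightarrow> c \<noteq> 0 \<Longrightarrow> minimal (c *\<^sub>R x)"
  unfolding minimal_def
  by (simp add: matrix_vector_mult_scaleR vsupp_def)

lemma conf_min_exists:
  assumes x: "A *v x = 0" "x \<noteq> 0"
  shows "\<exists>y. minimal y \<and> (\<forall>i. (B *v y) $ i \<noteq> 0 \<longrightarrow> 0 < (B *v y) $ i * (B *v x) $ i)"
proof -
  define P where "P y \<longleftrightarrow> A *v y = 0 \<and> y \<noteq> 0 \<and> (\<forall>i. (B *v y) $ i \<noteq> 0 \<longrightarrow> 0 < (B *v y) $ i * (B *v x) $ i)" for y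
  have "P x" using x by (auto simp: P_def zero_less_mult_iff linorder_neq_iff)
  then obtain y where Py: "P y" and ymin: "\<And>y'. P y' \<Longrightarrow> card (vsupp (B *v y)) \<le> card (vsupp (B *v y'))"
    using ex_has_least_nat[of P x "\<lambda>y. card (vsupp (B *v y))"] by blast
  have "minimal y"
    unfolding minimal_def
  proof (intro conjI)
    show "A *v y = 0" "y \<noteq> 0" using Py by (auto simp: P_def)
  next
    show "\<not> (\<exists>x'. A *v x' = 0 \<and> x' \<noteq> 0 \<and> vsupp (B *v x') \<subset> vsupp (B *v y))"
    proof
    assume "\<exists>x'. A *v x' = 0 \<and> x' \<noteq> 0 \<and> vsupp (B *v x') \<subset> vsupp (B *v y)"
    then obtain x' where x': "A *v x' = 0" "x' \<noteq> 0" "vsupp (B *v x') \<subset> vsupp (B *v y)" by blast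
    have "B *v x' \<noteq> 0" using Bnz x' by blast
    then obtain i0 where i0: "(B *v x') $ i0 \<noteq> 0" by (auto simp: vec_eq_iff)
    then have yi0: "(B *v y) $ i0 \<noteq> 0" using x'(3) by (auto simp: vsupp_def)
    define sg :: real where "sg = (if 0 < (B *v y) $ i0 * (B *v x') $ i0 then 1 else -1)"
    define w where "w = sg *\<^sub>R x'"
    have sg0: "sg \<noteq> 0" by (simp add: sg_def)
    have Bw: "B *v w = sg *\<^sub>R (B *v x')" by (simp add: w_def matrix_vector_mult_scaleR)
    have Aw: "A *v w = 0" using x' by (simp add: w_def matrix_vector_mult_scaleR)
    have wsupp: "vsupp (B *v w) = vsupp (B *v x')" using sg0 by (simp add: Bw vsupp_def)
    have wi0: "0 < (B *v y) $ i0 * (B *v w) $ i0"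
    proof (cases "0 < (B *v y) $ i0 * (B *v x') $ i0")
      case True then show ?thesis by (simp add: Bw sg_def)
    next
      case False
      then have "(B *v y) $ i0 * (B *v x') $ i0 < 0" using i0 yi0
        by (metis linorder_neqE_linordered_idom mult_eq_0_iff)
      then show ?thesis using False by (simp add: Bw sg_def)
    qed
    have sub: "vsupp (B *v w) \<subseteq> vsupp (B *v y)" using wsupp x'(3) by auto
    have ex: "\<exists>i. 0 < (B *v y) $ i * (B *v w) $ i" using wi0 by blast
    obtain t where t: "0 < t" "\<forall>i. 0 \<le> (B *v y - t *\<^sub>R (B *v w)) $ i * (B *v y) $ i"
      "vsupp (B *v y - t *\<^sub>R (B *v w)) \<subset> vsupp (B *v y)"
      using reduce[OF sub ex] by blast
    define y' where "y' = y - t *\<^sub>R w"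
    have By': "B *v y' = B *v y - t *\<^sub>R (B *v w)" by (simp add: y'_def Bvec_lin)
    have "P y'"
      unfolding P_def
    proof (intro conjI allI impI)
      show "A *v y' = 0" using Py Aw by (simp add: y'_def Bvec_lin P_def)
      show "y' \<noteq> 0"
      proof
        assume "y' = 0"
        then have "B *v y = t *\<^sub>R (B *v w)" using By' by simp
        then have "vsupp (B *v y) = vsupp (B *v w)" using t(1) by (simp add: vsupp_def)
        then show False using wsupp x'(3) by simp
      qed
      fix i assume ne: "(B *v y') $ i \<noteq> 0"
      then have "i \<in> vsupp (B *v y)" using t(3) By' by (auto simp: vsupp_def)
      then have yi: "(B *v y) $ i \<noteq> 0" by (simp add: vsupp_def)
      have "0 < (B *v y) $ i * (B *v x) $ i" using Py yi by (simp add: P_def)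
      moreover have "0 < (B *v y') $ i * (B *v y) $ i"
      proof -
        have "0 \<le> (B *v y') $ i * (B *v y) $ i" using t(2) By' by simp
        moreover have "(B *v y') $ i * (B *v y) $ i \<noteq> 0" using ne yi by simp
        ultimately show ?thesis by linarith
      qed
      ultimately show "0 < (B *v y') $ i * (B *v x) $ i" using sign_trans by blast
    qed
    moreover have "card (vsupp (B *v y')) < card (vsupp (B *v y))"
      using t(3) By' by (intro psubset_card_mono) auto
    ultimately show False using ymin[of y'] by linarith
  qed
  qed
  then show ?thesis using Py by (auto simp: P_def)
qed

end

lemma common_denom:
  fixes r :: "real^'n"
  assumes "\<forall>j. r $ j \<in> \<rat>"
  shows "\<exists>D::int. D > 0 \<and> (\<forall>j. of_int D * r $ j \<in> \<int>)"
proof -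
  have "\<forall>j. \<exists>p::int \<times> int. snd p > 0 \<and> r $ j = of_int (fst p) / of_int (snd p)"
  proof
    fix j
    obtain a b where "b > 0" "r $ j = of_int a / of_int b" using Rats_cases'[of "r $ j"] assms by blast
    then show "\<exists>p::int \<times> int. snd p > 0 \<and> r $ j = of_int (fst p) / of_int (snd p)"
      by (intro exI[of _ "(a, b)"]) simp
  qed
  then obtain f where f: "\<And>j. snd (f j) > 0" "\<And>j. r $ j = of_int (fst (f j)) / of_int (snd (f j))"
    by metis
  define D where "D = (\<Prod>k\<in>UNIV. snd (f k))"
  have Dpos: "D > 0" unfolding D_def using f(1) by (intro prod_pos) auto
  have "of_int D * r $ j \<in> \<int>" for j
  proof -
    have D: "D = snd (f j) * (\<Prod>k\<in>UNIV - {j}. snd (f k))"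
      unfolding D_def by (simp add: prod.remove)
    have bj: "(of_int (snd (f j)) :: real) \<noteq> 0" using f(1)[of j] by simp
    have "of_int D * r $ j = of_int (fst (f j) * (\<Prod>k\<in>UNIV - {j}. snd (f k)))"
      using bj by (simp add: D f(2)[of j] field_simps)
    then show ?thesis by (metis Ints_of_int)
  qed
  then show ?thesis using Dpos by blast
qed

context cctx
begin

lemma circuit_minimal: "g \<in> circuits A B \<Longrightarrow> minimal g"
  by (auto simp: circuits_def minimal_def)

lemma circuit_intro: "minimal g \<Longrightarrow> (\<forall>i. g $ i \<in> \<int>) \<Longrightarrow> Gcd ((\<lambda>i. \<lfloor>g $ i\<rfloor>) ` UNIV) = 1 \<Longrightarrow> g \<in> circuits A B"
  by (auto simp: circuits_def minimal_def)


lemma scale_to_circuit: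
  assumes xm: "minimal x"
  shows "\<exists>c>0. c *\<^sub>R x \<in> circuits A B"
proof -
  have x: "A *v x = 0" "x \<noteq> 0" using xm by (auto simp: minimal_def)
  define B' :: "real^'n^'mb" where "B' = (\<chi> i. if (B *v x) $ i = 0 then B $ i else 0)"
  define M where "M = stack_mat A B'"
  have B'mv: "(B' *v v) $ j = (if (B *v x) $ j = 0 then (B *v v) $ j else 0)" for v j
    by (auto simp: B'_def matrix_vector_mult_def)
  have Mmv: "(M *v v) $ Inl i = (A *v v) $ i" "(M *v v) $ Inr j = (B' *v v) $ j" for v i j
    by (simp_all add: M_def stack_mat_def matrix_vector_mult_def)
  have Mker: "M *v v = 0 \<longleftrightarrow> A *v v = 0 \<and> vsupp (B *v v) \<subseteq> vsupp (B *v x)" for v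
  proof -
    have "M *v v = 0 \<longleftrightarrow> (\<forall>k. (M *v v) $ k = 0)" by (simp add: vec_eq_iff)
    also have "\<dots> \<longleftrightarrow> (\<forall>i. (A *v v) $ i = 0) \<and> (\<forall>j. (B' *v v) $ j = 0)"
      by (subst all_sum_split) (simp add: Mmv)
    also have "\<dots> \<longleftrightarrow> A *v v = 0 \<and> vsupp (B *v v) \<subseteq> vsupp (B *v x)"
      by (auto simp: B'mv vec_eq_iff vsupp_def)
    finally show ?thesis .
  qed
  have ratM: "\<forall>k j. M $ k $ j \<in> \<rat>"
  proof (intro allI)
    fix k j show "M $ k $ j \<in> \<rat>"
      using ratA ratB by (cases k) (auto simp: M_def stack_mat_def B'_def)
  qed
  have "M *v x = 0" using Mker x by simp
  then obtain r where r: "r \<noteq> 0" "\<forall>j. r $ j \<in> \<rat>" "M *v r = 0"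
    using rat_kernel[OF ratM x(2)] by blast
  have rk: "A *v r = 0" "vsupp (B *v r) \<subseteq> vsupp (B *v x)" using r(3) Mker by auto
  obtain l where l: "r = l *\<^sub>R x" using mult_of_min[OF xm rk] by blast
  have l0: "l \<noteq> 0" using l r(1) by auto
  obtain D :: int where D: "D > 0" "\<forall>j. of_int D * r $ j \<in> \<int>" using common_denom[OF r(2)] by blast
  define z where "z j = \<lfloor>of_int D * r $ j\<rfloor>" for j
  have z: "of_int (z j) = of_int D * r $ j" for j
    using D(2) unfolding z_def by (metis Ints_cases floor_of_int)
  obtain j0 where j0: "r $ j0 \<noteq> 0" using r(1) by (auto simp: vec_eq_iff)
  have zj0: "z j0 \<noteq> 0"
  proof
    assume "z j0 = 0"
    then have "of_int D * r $ j0 = 0" using z[of j0] by simp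
    then show False using D(1) j0 by simp
  qed
  define G where "G = Gcd (range z)"
  have G0: "G \<noteq> 0" unfolding G_def using zj0 by auto
  have Gpos: "G > 0" using G0 Gcd_int_greater_eq_0[of "range z"] unfolding G_def by linarith
  define s where "s = (if 0 < l then G else - G)"
  have sdvd: "s dvd z j" for j
    unfolding s_def G_def by (auto intro: Gcd_dvd)
  define w where "w j = z j div s" for j
  have zw: "z j = s * w j" for j unfolding w_def using sdvd[of j] by simp
  have "range z = (*) s ` range w" by (auto simp: zw image_image)
  then have "G = normalize (s * Gcd (range w))" unfolding G_def by (simp add: Gcd_mult)
  also have "\<dots> = G * Gcd (range w)"
    using Gpos by (simp add: s_def abs_mult)
  finally have gw: "Gcd (range w) = 1" using Gpos by simp
  define g :: "real^'n" where "g = (\<chi> j. of_int (w j))"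
  define c where "c = of_int D * l / of_int s"
  have s0: "(of_int s :: real) \<noteq> 0" using Gpos by (simp add: s_def)
  have gc: "g = c *\<^sub>R x"
  proof -
    have "g $ j = (c *\<^sub>R x) $ j" for j
    proof -
      have "of_int (z j) = (of_int s :: real) * of_int (w j)" by (simp add: zw)
      then have "(of_int (w j) :: real) = of_int D * r $ j / of_int s" using s0 z[of j] by (simp add: field_simps)
      then show ?thesis by (simp add: g_def c_def l)
    qed
    then show ?thesis by (simp add: vec_eq_iff)
  qed
  have cpos: "c > 0"
  proof (cases "0 < l")
    case True then show ?thesis using D(1) Gpos by (simp add: c_def s_def)
  next
    case False then have "l < 0" using l0 by simp
    have "(of_int D::real) * l < 0" using D(1) \<open>l < 0\<close> by (simp add: mult_pos_neg)
    then show ?thesis using Gpos False by (simp add: c_def s_def divide_neg_neg divide_neg_pos)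
  qed
  have "minimal g" unfolding gc using minimal_scale[OF xm] cpos by simp
  moreover have "\<forall>i. g $ i \<in> \<int>" by (simp add: g_def)
  moreover have "(\<lambda>i. \<lfloor>g $ i\<rfloor>) ` UNIV = range w" by (simp add: g_def)
  ultimately have "g \<in> circuits A B" using gw circuit_intro by simp
  then show ?thesis using cpos gc by blast
qed

lemma E_add: "conf (B *v x) (B *v y) \<Longrightarrow> E (x + y) = E x + E y"
  by (simp add: E_def matrix_vector_right_distrib conf_add)

lemma E_scale: "0 \<le> c \<Longrightarrow> E (c *\<^sub>R x) = c *\<^sub>R E x"
  by (simp add: E_def matrix_vector_mult_scaleR pp_scale nn_scale)

lemma E_zero: "E 0 = 0"
  by (simp add: E_def vec_eq_iff zero_prod_def)

lemma E_hull: "A *v x = 0 \<Longrightarrow> E x \<in> convex_cone hull (E ` circuits A B)"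
proof (induction "card (vsupp (B *v x))" arbitrary: x rule: less_induct)
  case less
  show ?case
  proof (cases "x = 0")
    case True
    then show ?thesis by (simp add: E_zero convex_cone_hull_contains_0)
  next
    case False
    obtain y where y: "minimal y" "\<forall>i. (B *v y) $ i \<noteq> 0 \<longrightarrow> 0 < (B *v y) $ i * (B *v x) $ i"
      using conf_min_exists[OF less.prems False] by blast
    obtain c where c: "c > 0" "c *\<^sub>R y \<in> circuits A B" using scale_to_circuit[OF y(1)] by blast
    define g where "g = c *\<^sub>R y"
    have gC: "g \<in> circuits A B" using c by (simp add: g_def)
    have Bg: "B *v g = c *\<^sub>R (B *v y)" by (simp add: g_def matrix_vector_mult_scaleR)
    have gconf: "0 < (B *v g) $ i * (B *v x) $ i" if "(B *v g) $ i \<noteq> 0" for i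
    proof -
      have "(B *v y) $ i \<noteq> 0" using that by (simp add: Bg)
      then have "0 < (B *v y) $ i * (B *v x) $ i" using y(2) by blast
      then show ?thesis using c(1) by (simp add: Bg mult.assoc)
    qed
    have sub: "vsupp (B *v g) \<subseteq> vsupp (B *v x)"
    proof
      fix i assume "i \<in> vsupp (B *v g)"
      then have "(B *v g) $ i \<noteq> 0" by (simp add: vsupp_def)
      from gconf[OF this] have "(B *v x) $ i \<noteq> 0" by auto
      then show "i \<in> vsupp (B *v x)" by (simp add: vsupp_def)
    qed
    have gm: "minimal g" using circuit_minimal[OF gC] .
    then have "B *v g \<noteq> 0" using Bnz by (auto simp: minimal_def)
    then obtain i1 where i1: "(B *v g) $ i1 \<noteq> 0" by (auto simp: vec_eq_iff)
    have ex: "\<exists>i. 0 < (B *v x) $ i * (B *v g) $ i"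
      using gconf[OF i1] by (metis mult.commute)
    obtain t where t: "0 < t" "\<forall>i. 0 \<le> (B *v x - t *\<^sub>R (B *v g)) $ i * (B *v x) $ i"
      "vsupp (B *v x - t *\<^sub>R (B *v g)) \<subset> vsupp (B *v x)"
      using reduce[OF sub ex] by blast
    define x' where "x' = x - t *\<^sub>R g"
    have Bx': "B *v x' = B *v x - t *\<^sub>R (B *v g)" by (simp add: x'_def Bvec_lin)
    have Ag: "A *v g = 0" using gm by (simp add: minimal_def)
    have Ax': "A *v x' = 0" using less.prems Ag by (simp add: x'_def Bvec_lin)
    have "card (vsupp (B *v x')) < card (vsupp (B *v x))"
      using t(3) Bx' by (intro psubset_card_mono) auto
    then have IH: "E x' \<in> convex_cone hull (E ` circuits A B)" using less.hyps Ax' by blast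
    have cf: "conf (B *v x') (B *v (t *\<^sub>R g))"
      unfolding conf_def
    proof
      fix i
      show "0 \<le> (B *v x') $ i * (B *v (t *\<^sub>R g)) $ i"
      proof (cases "(B *v g) $ i = 0")
        case True then show ?thesis by (simp add: matrix_vector_mult_scaleR)
      next
        case False
        have "0 \<le> (B *v x') $ i * (B *v g) $ i"
          using sign_trans2[of "(B *v x') $ i" "(B *v x) $ i" "(B *v g) $ i"] t(2) gconf[OF False] Bx'
          by (simp add: mult.commute)
        then show ?thesis using t(1) by (simp add: matrix_vector_mult_scaleR mult.left_commute)
      qed
    qed
    have "x = x' + t *\<^sub>R g" by (simp add: x'_def)
    then have "E x = E x' + t *\<^sub>R E g"
      using E_add[OF cf] E_scale[of t g] t(1) by simp
    moreover have "E g \<in> convex_cone hull (E ` circuits A B)"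
      using gC by (intro hull_inc) auto
    ultimately show ?thesis
    proof -
      assume Ex: "E x = E x' + t *\<^sub>R E g" and Eg: "E g \<in> convex_cone hull (E ` circuits A B)"
      have cc: "convex_cone (convex_cone hull (E ` circuits A B))" by (rule convex_cone_convex_cone_hull)
      have "t *\<^sub>R E g \<in> convex_cone hull (E ` circuits A B)"
        using convex_cone_scaleR[OF cc _ Eg] t(1) by simp
      then show ?thesis using convex_cone_add[OF cc IH] Ex by simp
    qed
  qed
qed

end

lemma ax_nth: "axis i (1::real) $ j = (if j = i then 1 else 0)" by (simp add: axis_def)

lemma sum_axis: "(\<Sum>i\<in>UNIV. c i *\<^sub>R axis i (1::real)) = (\<chi> j. c j)"
proof -
  have "(\<Sum>i\<in>UNIV. c i * axis i 1 $ j) = c j" for j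
  proof -
    have "(\<Sum>i\<in>UNIV. c i * axis i 1 $ j) = (\<Sum>i\<in>UNIV. if i = j then c i else 0)"
      by (rule sum.cong) (auto simp: ax_nth)
    then show ?thesis by simp
  qed
  then show ?thesis by (simp add: vec_eq_iff)
qed

lemma convex_cone_sum_in:
  assumes "convex_cone S" "finite I" "\<And>i. i \<in> I \<Longrightarrow> f i \<in> S"
  shows "sum f I \<in> S"
  using assms(2,3)
proof (induction I rule: finite_induct)
  case empty then show ?case using assms(1) by (simp add: convex_cone_contains_0)
next
  case (insert a F) then show ?case using assms(1) by (simp add: convex_cone_add)
qed

context cctx
begin

definition e :: "'mb \<Rightarrow> (real^'n) \<times> (real^'mb) \<times> (real^'mb)" where
  "e i = (0, axis i 1, axis i 1)"

definition Tp :: "((real^'n) \<times> (real^'mb) \<times> (real^'mb)) set" where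
  "Tp = e ` {i. \<not> (\<exists>x. A *v x = 0 \<and> x \<noteq> 0 \<and> vsupp (B *v x) \<subseteq> {i})}"

lemma C_mem: "(x, p, m) \<in> cone_AB A B \<longleftrightarrow> A *v x = 0 \<and> B *v x = p - m \<and> (\<forall>i. 0 \<le> p $ i) \<and> (\<forall>i. 0 \<le> m $ i)"
  by (simp add: cone_AB_def)

lemma C_cc: "convex_cone (cone_AB A B)"
  unfolding convex_cone_iff
proof (intro conjI ballI allI impI)
  show "0 \<in> cone_AB A B" by (simp add: zero_prod_def C_mem)
next
  fix z1 z2 assume "z1 \<in> cone_AB A B" "z2 \<in> cone_AB A B"
  then show "z1 + z2 \<in> cone_AB A B"
    by (cases z1; cases z2) (auto simp: C_mem matrix_vector_right_distrib)
next
  fix z :: "(real^'n) \<times> (real^'mb) \<times> (real^'mb)" and c :: real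
  assume "z \<in> cone_AB A B" "0 \<le> c"
  then show "c *\<^sub>R z \<in> cone_AB A B"
    by (cases z) (auto simp: C_mem matrix_vector_mult_scaleR scaleR_diff_right)
qed

lemma C_pointed: "pointed_cone (cone_AB A B)"
  unfolding pointed_cone_def
proof (intro allI impI)
  fix z :: "(real^'n) \<times> (real^'mb) \<times> (real^'mb)"
  assume h: "z \<in> cone_AB A B \<and> - z \<in> cone_AB A B"
  obtain x p m where z: "z = (x, p, m)" by (cases z) auto
  have p: "p = 0" using h by (auto simp: z C_mem vec_eq_iff intro: order.antisym)
  have m: "m = 0" using h by (auto simp: z C_mem vec_eq_iff intro: order.antisym)
  have "A *v x = 0" "B *v x = 0" using h p m by (auto simp: z C_mem)
  then have "x = 0" by (rule P0)
  then show "z = 0" by (simp add: z p m zero_prod_def)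
qed

lemma E_in_C: "A *v x = 0 \<Longrightarrow> E x \<in> cone_AB A B"
  by (simp add: E_def C_mem pp_minus_nn)

lemma e_in_C: "e i \<in> cone_AB A B"
  by (simp add: e_def C_mem ax_nth)

lemma S_eq: "S_set A B = E ` circuits A B"
  by (auto simp: S_set_def E_def pp_def nn_def)

lemma e_hull: "e i \<in> convex_cone hull (E ` circuits A B \<union> Tp)"
proof (cases "e i \<in> Tp")
  case True then show ?thesis by (intro hull_inc) auto
next
  case False
  then obtain x where x: "A *v x = 0" "x \<noteq> 0" "vsupp (B *v x) \<subseteq> {i}"
    unfolding Tp_def by blast
  have Bx: "B *v x \<noteq> 0" using Bnz x by blast
  then have vx: "vsupp (B *v x) = {i}" using x(3) vsupp_zero by blast
  have xm: "minimal x"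
    unfolding minimal_def
  proof (intro conjI x(1,2) notI)
    assume "\<exists>x'. A *v x' = 0 \<and> x' \<noteq> 0 \<and> vsupp (B *v x') \<subset> vsupp (B *v x)"
    then obtain x' where x': "A *v x' = 0" "x' \<noteq> 0" "vsupp (B *v x') \<subset> vsupp (B *v x)" by blast
    then have "vsupp (B *v x') = {}" using vx by (metis psubset_eq subset_singleton_iff)
    then have "B *v x' = 0" using vsupp_zero by blast
    then show False using x' P0 by blast
  qed
  obtain c where c: "c > 0" "c *\<^sub>R x \<in> circuits A B" using scale_to_circuit[OF xm] by blast
  define g where "g = c *\<^sub>R x"
  have Ag: "A *v g = 0" using x by (simp add: g_def matrix_vector_mult_scaleR)
  have Bg: "B *v g = c *\<^sub>R (B *v x)" by (simp add: g_def matrix_vector_mult_scaleR)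
  define d where "d = (B *v g) $ i"
  have d0: "d \<noteq> 0" using vx c(1) by (auto simp: d_def Bg vsupp_def)
  have Bgj: "(B *v g) $ j = (if j = i then d else 0)" for j
    using vx by (auto simp: d_def Bg vsupp_def)
  have H: "convex_cone hull (E ` circuits A B) \<subseteq> convex_cone hull (E ` circuits A B \<union> Tp)"
    by (intro hull_mono) auto
  have cc: "convex_cone (convex_cone hull (E ` circuits A B \<union> Tp))" by (rule convex_cone_convex_cone_hull)
  have "E g \<in> convex_cone hull (E ` circuits A B \<union> Tp)" using E_hull[OF Ag] H by blast
  moreover have "E (- g) \<in> convex_cone hull (E ` circuits A B \<union> Tp)"
    using E_hull[of "- g"] Ag H by (auto simp: mv_neg)
  ultimately have sum_in: "E g + E (- g) \<in> convex_cone hull (E ` circuits A B \<union> Tp)"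
    using convex_cone_add[OF cc] by blast
  have "E g + E (- g) = \<bar>d\<bar> *\<^sub>R e i"
    by (auto simp: E_def e_def mv_neg vec_eq_iff Bgj ax_nth max_def)
  then have "e i = (1 / \<bar>d\<bar>) *\<^sub>R (E g + E (- g))" using d0 by simp
  then show ?thesis using convex_cone_scaleR[OF cc _ sum_in, of "1 / \<bar>d\<bar>"] by simp
qed

lemma generation: "cone_AB A B = convex_cone hull (E ` circuits A B \<union> Tp)"
proof
  have "E ` circuits A B \<union> Tp \<subseteq> cone_AB A B"
    using E_in_C e_in_C by (auto simp: Tp_def circuits_def)
  then show "convex_cone hull (E ` circuits A B \<union> Tp) \<subseteq> cone_AB A B"
    using C_cc by (intro hull_minimal) auto
next
  let ?H = "convex_cone hull (E ` circuits A B \<union> Tp)"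
  have cc: "convex_cone ?H" by (rule convex_cone_convex_cone_hull)
  show "cone_AB A B \<subseteq> ?H"
  proof
    fix z assume zC: "z \<in> cone_AB A B"
    obtain x p m where z: "z = (x, p, m)" by (cases z) auto
    have h: "A *v x = 0" "B *v x = p - m" "\<forall>i. 0 \<le> p $ i" "\<forall>i. 0 \<le> m $ i" using zC by (auto simp: z C_mem)
    define q where "q = (\<chi> i. min (p $ i) (m $ i))"
    have sq: "(\<Sum>i\<in>UNIV. q $ i *\<^sub>R e i) = (0, q, q)"
      by (simp add: e_def fst_sum snd_sum prod_eq_iff sum_axis)
    have "p = pp (B *v x) + q" "m = nn (B *v x) + q"
      using h(2) by (auto simp: q_def vec_eq_iff max_def min_def)
    then have z2: "z = E x + (\<Sum>i\<in>UNIV. q $ i *\<^sub>R e i)"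
      by (simp add: sq z E_def)
    have "E x \<in> ?H" using E_hull[OF h(1)] hull_mono[of "E ` circuits A B" "E ` circuits A B \<union> Tp"] by blast
    moreover have "(\<Sum>i\<in>UNIV. q $ i *\<^sub>R e i) \<in> ?H"
    proof (rule convex_cone_sum_in[OF cc])
      fix i :: 'mb
      have "0 \<le> q $ i" using h(3,4) by (simp add: q_def)
      then show "q $ i *\<^sub>R e i \<in> ?H" using convex_cone_scaleR[OF cc _ e_hull] by blast
    qed simp
    ultimately show "z \<in> ?H" using convex_cone_add[OF cc] z2 by simp
  qed
qed

end

context cctx
begin

lemma E_indecomp:
  assumes gC: "g \<in> circuits A B" and a: "a \<in> cone_AB A B" and b: "b \<in> cone_AB A B" and ab: "a + b = E g"
  shows "a \<in> ray (E g)"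
proof -
  have gm: "minimal g" using circuit_minimal[OF gC] .
  obtain x1 p1 m1 where a1: "a = (x1, p1, m1)" by (cases a) auto
  obtain x2 p2 m2 where b1: "b = (x2, p2, m2)" by (cases b) auto
  have ha: "A *v x1 = 0" "B *v x1 = p1 - m1" "\<forall>i. 0 \<le> p1 $ i" "\<forall>i. 0 \<le> m1 $ i" using a by (auto simp: a1 C_mem)
  have hb: "\<forall>i. 0 \<le> p2 $ i" "\<forall>i. 0 \<le> m2 $ i" using b by (auto simp: b1 C_mem)
  have s: "p1 + p2 = pp (B *v g)" "m1 + m2 = nn (B *v g)" using ab by (auto simp: a1 b1 E_def)
  have p1le: "p1 $ i \<le> max ((B *v g) $ i) 0" for i
    using hb(1) arg_cong[OF s(1), of "\<lambda>v. v $ i"] by (metis pp_nth vector_add_component le_add_same_cancel1)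
  have m1le: "m1 $ i \<le> max (- (B *v g) $ i) 0" for i
    using hb(2) arg_cong[OF s(2), of "\<lambda>v. v $ i"] by (metis nn_nth vector_add_component le_add_same_cancel1)
  have sub: "vsupp (B *v x1) \<subseteq> vsupp (B *v g)"
  proof
    fix i assume "i \<in> vsupp (B *v x1)"
    then have "p1 $ i - m1 $ i \<noteq> 0" using ha(2) by (simp add: vsupp_def)
    moreover have "(B *v g) $ i = 0 \<Longrightarrow> p1 $ i = 0 \<and> m1 $ i = 0"
      using p1le[of i] m1le[of i] ha(3,4) by (auto intro: order.antisym)
    ultimately show "i \<in> vsupp (B *v g)" by (auto simp: vsupp_def)
  qed
  obtain l where l: "x1 = l *\<^sub>R g" using mult_of_min[OF gm ha(1) sub] by blast
  have Bx1: "p1 $ i - m1 $ i = l * (B *v g) $ i" for i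
    using arg_cong[OF ha(2), of "\<lambda>v. v $ i"] by (simp add: l matrix_vector_mult_scaleR)
  have comp: "p1 $ i = l * max ((B *v g) $ i) 0 \<and> m1 $ i = l * max (- (B *v g) $ i) 0" for i
  proof (cases "(B *v g) $ i" "0::real" rule: linorder_cases)
    case less
    then have "p1 $ i = 0" using p1le[of i] ha(3) by (auto intro: order.antisym)
    then show ?thesis using Bx1[of i] less by simp
  next
    case equal
    then show ?thesis using p1le[of i] m1le[of i] ha(3,4) by (auto intro: order.antisym)
  next
    case greater
    then have "m1 $ i = 0" using m1le[of i] ha(4) by (auto intro: order.antisym)
    then show ?thesis using Bx1[of i] greater by simp
  qed
  have "B *v g \<noteq> 0" using Bnz gm by (auto simp: minimal_def)
  then obtain i1 where i1: "(B *v g) $ i1 \<noteq> 0" by (auto simp: vec_eq_iff)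
  have l0: "0 \<le> l"
  proof (cases "0 < (B *v g) $ i1")
    case True
    then have "0 \<le> l * (B *v g) $ i1" using comp[of i1] ha(3) by (metis max.absorb1 less_imp_le)
    then show ?thesis using True by (simp add: zero_le_mult_iff)
  next
    case False
    then have neg: "(B *v g) $ i1 < 0" using i1 by simp
    then have "0 \<le> l * (- (B *v g) $ i1)" using comp[of i1] ha(4) by (metis max.absorb1 less_imp_le neg_0_less_iff_less)
    then show ?thesis using neg by (auto simp: mult_le_0_iff zero_le_mult_iff)
  qed
  have "a = l *\<^sub>R E g"
    using comp by (simp add: a1 E_def l vec_eq_iff)
  then show ?thesis using l0 by (auto simp: ray_def)
qed

lemma e_indecomp:
  assumes iT: "\<not> (\<exists>x. A *v x = 0 \<and> x \<noteq> 0 \<and> vsupp (B *v x) \<subseteq> {i})"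
    and a: "a \<in> cone_AB A B" and b: "b \<in> cone_AB A B" and ab: "a + b = e i"
  shows "a \<in> ray (e i)"
proof -
  obtain x1 p1 m1 where a1: "a = (x1, p1, m1)" by (cases a) auto
  obtain x2 p2 m2 where b1: "b = (x2, p2, m2)" by (cases b) auto
  have ha: "A *v x1 = 0" "B *v x1 = p1 - m1" "\<forall>i. 0 \<le> p1 $ i" "\<forall>i. 0 \<le> m1 $ i" using a by (auto simp: a1 C_mem)
  have hb: "\<forall>i. 0 \<le> p2 $ i" "\<forall>i. 0 \<le> m2 $ i" using b by (auto simp: b1 C_mem)
  have s: "p1 + p2 = axis i 1" "m1 + m2 = axis i 1" using ab by (auto simp: a1 b1 e_def)
  have pj: "p1 $ j = 0" "m1 $ j = 0" if "j \<noteq> i" for j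
  proof -
    have "p1 $ j + p2 $ j = 0" "m1 $ j + m2 $ j = 0"
      using arg_cong[OF s(1), of "\<lambda>v. v $ j"] arg_cong[OF s(2), of "\<lambda>v. v $ j"] that by (auto simp: ax_nth)
    then show "p1 $ j = 0" "m1 $ j = 0" using ha(3,4) hb by (metis add_nonneg_eq_0_iff)+
  qed
  have "vsupp (B *v x1) \<subseteq> {i}"
  proof
    fix j assume "j \<in> vsupp (B *v x1)"
    then have "p1 $ j \<noteq> m1 $ j" using ha(2) by (simp add: vsupp_def)
    then show "j \<in> {i}" using pj by (cases "j = i") auto
  qed
  then have x10: "x1 = 0" using iT ha(1) by blast
  then have pm: "p1 = m1" using ha(2) by simp
  have "p1 = p1 $ i *\<^sub>R axis i 1" using pj by (auto simp: vec_eq_iff ax_nth)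
  then have "a = p1 $ i *\<^sub>R e i" by (simp add: a1 x10 pm[symmetric] e_def)
  then show ?thesis using ha(3) by (auto simp: ray_def)
qed

lemma ext1:
  assumes "s \<in> E ` circuits A B \<union> Tp"
  shows "extreme_ray_of (ray s) (cone_AB A B)"
proof -
  have "s \<noteq> 0 \<and> ray s face_of cone_AB A B"
  proof (cases "s \<in> E ` circuits A B")
    case True
    then obtain g where g: "g \<in> circuits A B" "s = E g" by blast
    have "s \<noteq> 0" using g by (auto simp: E_def circuits_def zero_prod_def)
    moreover have "ray s face_of cone_AB A B"
      using g E_indecomp[OF g(1)] E_in_C[of g]
      by (intro face_ray[OF C_cc C_pointed]) (auto simp: circuits_def)
    ultimately show ?thesis by blast
  next
    case False
    then obtain i where i: "\<not> (\<exists>x. A *v x = 0 \<and> x \<noteq> 0 \<and> vsupp (B *v x) \<subseteq> {i})" "s = e i"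
      using assms by (auto simp: Tp_def)
    have "s \<noteq> 0" using i by (auto simp: e_def zero_prod_def)
    moreover have "ray s face_of cone_AB A B"
      using i e_indecomp[OF i(1)] e_in_C[of i]
      by (intro face_ray[OF C_cc C_pointed]) auto
    ultimately show ?thesis by blast
  qed
  then show ?thesis unfolding extreme_ray_of_def by blast
qed

end

context cctx
begin

lemma ext2:
  assumes "extreme_ray_of R (cone_AB A B)"
  shows "R \<in> ray ` (E ` circuits A B \<union> Tp)"
proof -
  obtain r where r: "r \<noteq> 0" "R = ray r" "R face_of cone_AB A B" using assms extreme_ray_of_def by blast
  have rray: "r \<in> ray r" unfolding ray_def by (auto intro: exI[of _ 1])
  have rC: "r \<in> cone_AB A B" using r rray face_of_imp_subset by blast
  have KP: "a \<in> ray r" if ab: "a \<in> cone_AB A B" "b \<in> cone_AB A B" "a + b = r" for a b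
  proof (cases "a = b")
    case True
    then have "2 *\<^sub>R a = r" using ab(3) by (simp add: scaleR_2)
    then have "a = (1/2) *\<^sub>R r" by auto
    then show ?thesis unfolding ray_def by (auto intro: exI[of _ "1/2"])
  next
    case False
    have "midpoint a b = (1/2) *\<^sub>R r" by (simp add: midpoint_def ab(3))
    then have "midpoint a b \<in> R" unfolding r(2) ray_def by (auto intro: exI[of _ "1/2"])
    moreover have "midpoint a b \<in> open_segment a b" using False by simp
    ultimately have "a \<in> R" using r(3) ab unfolding face_of_def by blast
    then show ?thesis using r(2) by simp
  qed
  obtain x p m where rr: "r = (x, p, m)" by (cases r) auto
  have h: "A *v x = 0" "B *v x = p - m" "\<forall>i. 0 \<le> p $ i" "\<forall>i. 0 \<le> m $ i" using rC by (auto simp: rr C_mem)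
  show ?thesis
  proof (cases "\<exists>i. 0 < p $ i \<and> 0 < m $ i")
    case True
    then obtain i where i: "0 < p $ i" "0 < m $ i" by blast
    define \<mu> where "\<mu> = min (p $ i) (m $ i)"
    have \<mu>: "0 < \<mu>" "\<mu> \<le> p $ i" "\<mu> \<le> m $ i" using i by (auto simp: \<mu>_def)
    define a where "a = \<mu> *\<^sub>R e i"
    have aC: "a \<in> cone_AB A B" unfolding a_def using convex_cone_scaleR[OF C_cc _ e_in_C] \<mu>(1) by simp
    have bC: "r - a \<in> cone_AB A B"
    proof -
      have "r - a = (x, p - \<mu> *\<^sub>R axis i 1, m - \<mu> *\<^sub>R axis i 1)" by (simp add: rr a_def e_def)
      moreover have "\<forall>j. 0 \<le> (p - \<mu> *\<^sub>R axis i 1) $ j" "\<forall>j. 0 \<le> (m - \<mu> *\<^sub>R axis i 1) $ j"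
        using h(3,4) \<mu> by (auto simp: ax_nth)
      ultimately show ?thesis using h(1,2) by (simp add: C_mem algebra_simps)
    qed
    have "a \<in> ray r" using KP[OF aC bC] by simp
    then obtain \<tau> where \<tau>: "0 \<le> \<tau>" "a = \<tau> *\<^sub>R r" by (auto simp: ray_def)
    have a0: "a \<noteq> 0" using \<mu>(1) by (auto simp: a_def e_def zero_prod_def)
    then have \<tau>0: "0 < \<tau>" using \<tau> by (cases "\<tau> = 0") auto
    define \<nu> where "\<nu> = \<mu> / \<tau>"
    have \<nu>0: "0 < \<nu>" using \<mu>(1) \<tau>0 by (simp add: \<nu>_def)
    have rei: "r = \<nu> *\<^sub>R e i"
    proof -
      have "r = (1 / \<tau>) *\<^sub>R a" using \<tau> \<tau>0 by simp
      then show ?thesis by (simp add: a_def \<nu>_def)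
    qed
    have x0: "x = 0" using rei by (simp add: rr e_def)
    have notex: "\<not> (\<exists>x'. A *v x' = 0 \<and> x' \<noteq> 0 \<and> vsupp (B *v x') \<subseteq> {i})"
    proof
      assume "\<exists>x'. A *v x' = 0 \<and> x' \<noteq> 0 \<and> vsupp (B *v x') \<subseteq> {i}"
      then obtain x' where x': "A *v x' = 0" "x' \<noteq> 0" "vsupp (B *v x') \<subseteq> {i}" by blast
      define d where "d = (B *v x') $ i"
      have Bx'j: "(B *v x') $ j = 0" if "j \<noteq> i" for j using x'(3) that by (auto simp: vsupp_def)
      have d0: "d \<noteq> 0"
      proof
        assume dz: "d = 0"
        have "\<forall>j. (B *v x') $ j = 0"
        proof
          fix j show "(B *v x') $ j = 0" using Bx'j[of j] dz by (cases "j = i") (auto simp: d_def)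
        qed
        then have "B *v x' = 0" by (simp add: vec_eq_iff)
        then show False using x' P0 by blast
      qed
      define y where "y = (\<nu> / \<bar>d\<bar>) *\<^sub>R x'"
      have Ay: "A *v y = 0" using x' by (simp add: y_def matrix_vector_mult_scaleR)
      have By: "B *v y = (\<nu> / \<bar>d\<bar>) *\<^sub>R (B *v x')" by (simp add: y_def matrix_vector_mult_scaleR)
      have Byj: "(B *v y) $ j = 0" if "j \<noteq> i" for j using Bx'j[OF that] by (simp add: By)
      have Byi: "\<bar>(B *v y) $ i\<bar> = \<nu>" using d0 \<nu>0 by (simp add: By d_def[symmetric] abs_mult)
      have y0: "y \<noteq> 0" using x'(2) \<nu>0 d0 by (simp add: y_def)
      have aC': "E y \<in> cone_AB A B" using E_in_C[OF Ay] .
      have bC': "r - E y \<in> cone_AB A B"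
      proof -
        have eq: "r - E y = (- y, \<nu> *\<^sub>R axis i 1 - pp (B *v y), \<nu> *\<^sub>R axis i 1 - nn (B *v y))"
          by (simp add: rei e_def E_def x0)
        have "B *v (- y) = (\<nu> *\<^sub>R axis i 1 - pp (B *v y)) - (\<nu> *\<^sub>R axis i 1 - nn (B *v y))"
          using pp_minus_nn[of "B *v y"] by (simp add: mv_neg algebra_simps)
        moreover have "\<forall>j. 0 \<le> (\<nu> *\<^sub>R axis i 1 - pp (B *v y)) $ j" "\<forall>j. 0 \<le> (\<nu> *\<^sub>R axis i 1 - nn (B *v y)) $ j"
          using Byj Byi by (auto simp: ax_nth abs_if split: if_splits)
        ultimately show ?thesis using Ay by (simp add: eq C_mem mv_neg)
      qed
      have "E y \<in> ray r" using KP[OF aC' bC'] by simp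
      then obtain \<tau>' where "E y = \<tau>' *\<^sub>R r" by (auto simp: ray_def)
      then have "y = \<tau>' *\<^sub>R x" by (simp add: E_def rr)
      then show False using y0 x0 by simp
    qed
    have "e i \<in> Tp" using notex by (auto simp: Tp_def)
    moreover have "R = ray (e i)" using r(2) rei ray_scale[OF \<nu>0] by simp
    ultimately show ?thesis by blast
  next
    case False
    have pw: "p $ i = max ((B *v x) $ i) 0 \<and> m $ i = max (- (B *v x) $ i) 0" for i
    proof -
      have "p $ i \<le> 0 \<or> m $ i \<le> 0" using False by (auto simp: not_less)
      moreover have "0 \<le> p $ i" "0 \<le> m $ i" "(B *v x) $ i = p $ i - m $ i" using h by auto
      ultimately show ?thesis by (auto simp: max_def)
    qed
    have pm: "p = pp (B *v x)" "m = nn (B *v x)"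
      using pw by (auto simp: vec_eq_iff)
    then have rE: "r = E x" by (simp add: rr E_def)
    have x0: "x \<noteq> 0"
    proof
      assume "x = 0" then have "r = 0" using rE by (simp add: E_zero)
      then show False using r(1) by simp
    qed
    have xm: "minimal x"
      unfolding minimal_def
    proof (intro conjI h(1) x0 notI)
      assume "\<exists>x'. A *v x' = 0 \<and> x' \<noteq> 0 \<and> vsupp (B *v x') \<subset> vsupp (B *v x)"
      then obtain x' where x': "A *v x' = 0" "x' \<noteq> 0" "vsupp (B *v x') \<subset> vsupp (B *v x)" by blast
      define U where "U = vsupp (B *v x)"
      have U: "finite U" "U \<noteq> {}" using Bnz[OF h(1) x0] vsupp_zero by (auto simp: U_def)
      define f where "f i = \<bar>(B *v x) $ i\<bar> / (\<bar>(B *v x') $ i\<bar> + 1)" for i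
      define \<epsilon> where "\<epsilon> = Min (f ` U)"
      have fpos: "0 < f i" if "i \<in> U" for i using that by (simp add: f_def U_def vsupp_def)
      have "\<epsilon> \<in> f ` U" unfolding \<epsilon>_def using U by (intro Min_in) auto
      then have \<epsilon>0: "0 < \<epsilon>" using fpos by auto
      have bound: "\<bar>\<epsilon> * (B *v x') $ i\<bar> \<le> \<bar>(B *v x) $ i\<bar>" for i
      proof (cases "i \<in> U")
        case True
        have "\<epsilon> \<le> f i" unfolding \<epsilon>_def using U True by (intro Min_le) auto
        then have "\<epsilon> * (\<bar>(B *v x') $ i\<bar> + 1) \<le> \<bar>(B *v x) $ i\<bar>"
          by (simp add: f_def pos_le_divide_eq add_pos_nonneg)
        then show ?thesis using \<epsilon>0 by (simp add: abs_mult algebra_simps)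
      next
        case False
        then have "(B *v x') $ i = 0" using x'(3) by (auto simp: U_def vsupp_def)
        then show ?thesis by simp
      qed
      define u1 where "u1 = x + \<epsilon> *\<^sub>R x'"
      define u2 where "u2 = x - \<epsilon> *\<^sub>R x'"
      have Bu: "B *v u1 = B *v x + \<epsilon> *\<^sub>R (B *v x')" "B *v u2 = B *v x - \<epsilon> *\<^sub>R (B *v x')"
        by (simp_all add: u1_def u2_def matrix_vector_right_distrib Bvec_lin matrix_vector_mult_scaleR)
      have Au: "A *v u1 = 0" "A *v u2 = 0"
        using h(1) x'(1) by (simp_all add: u1_def u2_def matrix_vector_right_distrib Bvec_lin matrix_vector_mult_scaleR)
      have cf: "conf (B *v u1) (B *v u2)"
        unfolding conf_def
      proof
        fix i
        have "(\<epsilon> * (B *v x') $ i)\<^sup>2 \<le> ((B *v x) $ i)\<^sup>2" using bound[of i] abs_le_square_iff by blast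
        then show "0 \<le> (B *v u1) $ i * (B *v u2) $ i"
          by (simp add: Bu algebra_simps power2_eq_square)
      qed
      have "u1 + u2 = 2 *\<^sub>R x" by (simp add: u1_def u2_def scaleR_2)
      then have sumE: "E u1 + E u2 = 2 *\<^sub>R E x" using E_add[OF cf] E_scale[of 2 x] by simp
      have aC: "(1/2) *\<^sub>R E u1 \<in> cone_AB A B" using convex_cone_scaleR[OF C_cc _ E_in_C[OF Au(1)]] by simp
      have bC: "(1/2) *\<^sub>R E u2 \<in> cone_AB A B" using convex_cone_scaleR[OF C_cc _ E_in_C[OF Au(2)]] by simp
      have "(1/2) *\<^sub>R E u1 + (1/2) *\<^sub>R E u2 = r"
        using sumE rE by (simp add: scaleR_add_right[symmetric])
      then have "(1/2) *\<^sub>R E u1 \<in> ray r" using KP[OF aC bC] by simp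
      then obtain \<tau> where "(1/2) *\<^sub>R E u1 = \<tau> *\<^sub>R r" by (auto simp: ray_def)
      then have "(1/2) *\<^sub>R u1 = \<tau> *\<^sub>R x" by (simp add: E_def rE)
      then have u1e: "u1 = (2 * \<tau>) *\<^sub>R x"
      proof -
        assume hh: "(1/2) *\<^sub>R u1 = \<tau> *\<^sub>R x"
        have "u1 = 2 *\<^sub>R ((1/2) *\<^sub>R u1)" by simp
        also have "\<dots> = (2 * \<tau>) *\<^sub>R x" using hh by simp
        finally show ?thesis .
      qed
      have "\<epsilon> *\<^sub>R x' = u1 - x" by (simp add: u1_def)
      also have "\<dots> = (2 * \<tau> - 1) *\<^sub>R x" by (simp add: u1e scaleR_diff_left)
      finally have ex': "\<epsilon> *\<^sub>R x' = (2 * \<tau> - 1) *\<^sub>R x" .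
      have "x' = (1 / \<epsilon>) *\<^sub>R (\<epsilon> *\<^sub>R x')" using \<epsilon>0 by simp
      then have xk: "x' = ((2 * \<tau> - 1) / \<epsilon>) *\<^sub>R x" using ex' by simp
      define k where "k = (2 * \<tau> - 1) / \<epsilon>"
      have k0: "k \<noteq> 0" using x'(2) xk by (auto simp: k_def)
      have "B *v x' = k *\<^sub>R (B *v x)" using xk by (simp add: k_def matrix_vector_mult_scaleR)
      then have "vsupp (B *v x') = vsupp (B *v x)" using k0 by (simp add: vsupp_def)
      then show False using x'(3) by simp
    qed
    obtain c where c: "c > 0" "c *\<^sub>R x \<in> circuits A B" using scale_to_circuit[OF xm] by blast
    have "E (c *\<^sub>R x) = c *\<^sub>R r" using E_scale[of c x] c(1) rE by simp
    then have "R = ray (E (c *\<^sub>R x))" using r(2) ray_scale[OF c(1), of r] by simp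
    then show ?thesis using c(2) by blast
  qed
qed

end

theorem theorem3:
  fixes A :: "real^'n^'ma" and B :: "real^'n^'mb"
  assumes ratA: "\<forall>i j. A $ i $ j \<in> \<rat>"
    and ratB: "\<forall>i j. B $ i $ j \<in> \<rat>"
    and pointed: "pointed_poly A B"
  shows "pointed_cone (cone_AB A B) \<and>
    (\<exists>T'. T' \<subseteq> (T_set :: ((real^'n) \<times> (real^'mb) \<times> (real^'mb)) set) \<and> card T' \<le> CARD('mb) \<and>
       cone_AB A B = convex_cone hull (S_set A B \<union> T') \<and>
       {R. extreme_ray_of R (cone_AB A B)} = ray ` (S_set A B \<union> T'))"
proof -
  have inj: "inj ((*v) (stack_mat A B))" using pointed full_rank_injective unfolding pointed_poly_def by blast
  have P0: "x = 0" if "A *v x = 0" "B *v x = 0" for x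
  proof -
    have "(stack_mat A B *v x) $ k = 0" for k
      using that by (cases k) (simp_all add: stack_mv)
    then have "stack_mat A B *v x = stack_mat A B *v 0" by (simp add: vec_eq_iff)
    then show ?thesis using inj by (metis injD)
  qed
  interpret cctx A B using P0 ratA ratB by unfold_locales auto
  have "Tp \<subseteq> (T_set :: ((real^'n) \<times> (real^'mb) \<times> (real^'mb)) set)"
    by (auto simp: Tp_def T_set_def e_def)
  moreover have "card Tp \<le> CARD('mb)"
  proof -
    have "card Tp \<le> card {i. \<not> (\<exists>x. A *v x = 0 \<and> x \<noteq> 0 \<and> vsupp (B *v x) \<subseteq> {i})}"
      unfolding Tp_def by (rule card_image_le) simp
    also have "\<dots> \<le> CARD('mb)" by (rule card_mono) auto
    finally show ?thesis .
  qed
  moreover have "cone_AB A B = convex_cone hull (S_set A B \<union> Tp)"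
    using generation by (simp add: S_eq)
  moreover have "{R. extreme_ray_of R (cone_AB A B)} = ray ` (S_set A B \<union> Tp)"
    unfolding S_eq using ext1 ext2 by blast
  ultimately show ?thesis using C_pointed by blast
qed

end
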